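(* Let $R\subset\mathbb N$ be such that for every minimal distal system $(X,T)$ and every $x\in X$ one has $\inf_{n\in R} d(T^nx,x)=0$. Then for every minimal distal system $(X,T)$, every $x\in X$ and every $\ell\ge1$ one has $\inf_{n\in R}\max_{1\le j\le\ell} d(T^{jn}x,x)=0$.
   Context: A system is a compact metric space $X$ with a homeomorphism $T$; minimal means no proper nonempty closed invariant subset. It is distal if $\inf_{n\in\mathbb Z} d(T^nx,T^nx')>0$ for all $x\ne x'$. *)

theory Defs
  imports "HOL-Analysis.Analysis"
begin

definition iter_int :: "'a set \<Rightarrow> ('a \<Rightarrow> 'a) \<Rightarrow> int \<Rightarrow> 'a \<Rightarrow> 'a" where
  "iter_int X T n x = (if 0 \<le> n then (T ^^ nat n) x else (inv_into X T ^^ nat (- n)) x)"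

definition is_system :: "'a::metric_space set \<Rightarrow> ('a \<Rightarrow> 'a) \<Rightarrow> bool" where
  "is_system X T \<longleftrightarrow> compact X \<and> X \<noteq> {} \<and> (\<exists>S. homeomorphism X X T S)"

definition minimal_system :: "'a::metric_space set \<Rightarrow> ('a \<Rightarrow> 'a) \<Rightarrow> bool" where
  "minimal_system X T \<longleftrightarrow> is_system X T \<and>
     (\<forall>Y. Y \<subseteq> X \<and> Y \<noteq> {} \<and> closed Y \<and> T ` Y = Y \<longrightarrow> Y = X)"

definition distal_system :: "'a::metric_space set \<Rightarrow> ('a \<Rightarrow> 'a) \<Rightarrow> bool" where
  "distal_system X T \<longleftrightarrow> is_system X T \<and>
     (\<forall>x\<in>X. \<forall>x'\<in>X. x \<noteq> x' \<longrightarrow>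
        (\<exists>e>0. \<forall>n::int. e \<le> dist (iter_int X T n x) (iter_int X T n x')))"

definition minimal_distal_system :: "'a::metric_space set \<Rightarrow> ('a \<Rightarrow> 'a) \<Rightarrow> bool" where
  "minimal_distal_system X T \<longleftrightarrow> minimal_system X T \<and> distal_system X T"

end

theory Submission
  imports Defs
begin
lemma Hausdorff_fun: "Hausdorff_space (euclidean :: ('a\<Rightarrow>'b::metric_space) topology)"
proof -
  have "Hausdorff_space (product_topology (\<lambda>i. euclidean::'b topology) (UNIV::'a set))"
    by (rule Hausdorff_space_product_topology[THEN iffD2]) simp
  then show ?thesis by (metis euclidean_product_topology)
qed
lemma compact_fun_closed: fixes S :: "('a \<Rightarrow> 'b::metric_space) set" assumes "compact S" shows "closed S"
  using compactin_imp_closedin[OF Hausdorff_fun] assms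
  by (metis closed_closedin compactin_euclidean_iff)

lemma cont_rcomp: "continuous_on UNIV (\<lambda>f::'b\<Rightarrow>'c::topological_space. f \<circ> g)"
  by (intro continuous_on_coordinatewise_then_product) (simp add: o_def)

lemma cont_eval: "continuous_on A (\<lambda>f::'b\<Rightarrow>'c::topological_space. f y)"
  by (rule continuous_on_subset[OF continuous_on_product_coordinates]) simp

lemma finite_chain_min:
  assumes "finite F" "F \<noteq> {}" "\<forall>a\<in>F. \<forall>b\<in>F. a \<subseteq> b \<or> b \<subseteq> a"
  shows "\<exists>m\<in>F. \<forall>a\<in>F. m \<subseteq> (a::'x set)"
  using assms
proof (induction F rule: finite_ne_induct)
  case (singleton x) then show ?case by auto
next
  case (insert x F)
  then obtain m where m: "m \<in> F" "\<forall>a\<in>F. m \<subseteq> a" by auto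
  show ?case
  proof (cases "x \<subseteq> m")
    case True then show ?thesis using m by auto
  next
    case False then have "m \<subseteq> x" using insert.prems m(1) by auto
    then show ?thesis using m by auto
  qed
qed

lemma idempotent_exists:
  fixes S :: "('b \<Rightarrow> 'b::metric_space) set"
  assumes S: "compact S" "S \<noteq> {}" "\<And>a b. a\<in>S \<Longrightarrow> b\<in>S \<Longrightarrow> a \<circ> b \<in> S"
  shows "\<exists>u\<in>S. u \<circ> u = u"
proof -
  define \<A> where "\<A> = {A. A \<subseteq> S \<and> A \<noteq> {} \<and> closed A \<and> (\<forall>a\<in>A. \<forall>b\<in>A. a \<circ> b \<in> A)}"
  define P where "P = (\<lambda>A B::('b\<Rightarrow>'b) set. B \<subseteq> A)"
  have cS: "closed S" using S(1) compact_fun_closed by blast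
  have po: "partial_order_on \<A> (relation_of P \<A>)"
    unfolding partial_order_on_def preorder_on_def refl_on_def relation_of_def antisym_def trans_def P_def
    by auto
  have "\<exists>m \<in> \<A>. \<forall>a \<in> \<A>. P m a \<longrightarrow> a = m"
  proof (rule predicate_Zorn[OF po])
    fix C assume C: "C \<in> Chains (relation_of P \<A>)"
    then have CA: "C \<subseteq> \<A>" and tot: "\<forall>a\<in>C. \<forall>b\<in>C. a \<subseteq> b \<or> b \<subseteq> a"
      unfolding Chains_def relation_of_def P_def by auto
    show "\<exists>u \<in> \<A>. \<forall>a \<in> C. P a u"
    proof (cases "C = {}")
      case True
      then show ?thesis using S cS unfolding \<A>_def P_def by auto
    next
      case False
      have "S \<inter> \<Inter>C \<noteq> {}"
      proof (rule compact_imp_fip[OF S(1)])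
        show "closed T" if "T \<in> C" for T using that CA unfolding \<A>_def by auto
        fix F' assume F': "finite F'" "F' \<subseteq> C"
        show "S \<inter> \<Inter>F' \<noteq> {}"
        proof (cases "F' = {}")
          case True then show ?thesis using S by auto
        next
          case False
          then obtain m where m: "m \<in> F'" "\<forall>a\<in>F'. m \<subseteq> a"
            using finite_chain_min[OF F'(1) False] tot F'(2) by blast
          then have "m \<in> \<A>" using F' CA by auto
          then have "m \<subseteq> S \<inter> \<Inter>F'" "m \<noteq> {}" using m unfolding \<A>_def by auto
          then show ?thesis by blast
        qed
      qed
      moreover have "\<Inter>C \<subseteq> S"
      proof -
        obtain c where "c \<in> C" using False by auto
        then have "c \<subseteq> S" using CA unfolding \<A>_def by auto
        then show ?thesis using \<open>c \<in> C\<close> by blast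
      qed
      moreover have "closed (\<Inter>C)" using CA unfolding \<A>_def by (intro closed_Inter) auto
      moreover have "\<forall>a\<in>\<Inter>C. \<forall>b\<in>\<Inter>C. a \<circ> b \<in> \<Inter>C" using CA unfolding \<A>_def by blast
      ultimately have "\<Inter>C \<in> \<A>" unfolding \<A>_def by auto
      then show ?thesis unfolding P_def by auto
    qed
  qed
  then obtain A where A: "A \<in> \<A>" and Amin: "\<And>B. B \<in> \<A> \<Longrightarrow> B \<subseteq> A \<Longrightarrow> B = A"
    unfolding P_def by auto
  have AS: "A \<subseteq> S" "A \<noteq> {}" "closed A" "\<And>a b. a\<in>A \<Longrightarrow> b\<in>A \<Longrightarrow> a \<circ> b \<in> A"
    using A unfolding \<A>_def by auto
  have cA: "compact A" using AS(1,3) S(1) compact_Int_closed[of S A] by (simp add: Int_absorb1)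
  obtain a where a: "a \<in> A" using AS(2) by auto
  define Aa where "Aa = (\<lambda>f. f \<circ> a) ` A"
  have "compact Aa" unfolding Aa_def
    using compact_continuous_image[OF continuous_on_subset[OF cont_rcomp] cA] by auto
  then have "closed Aa" using compact_fun_closed by blast
  moreover have "Aa \<subseteq> A" unfolding Aa_def using AS(4) a by auto
  moreover have "\<forall>x\<in>Aa. \<forall>y\<in>Aa. x \<circ> y \<in> Aa"
  proof (intro ballI)
    fix x y assume "x \<in> Aa" "y \<in> Aa"
    then obtain x' y' where "x' \<in> A" "y' \<in> A" "x = x' \<circ> a" "y = y' \<circ> a" unfolding Aa_def by auto
    then show "x \<circ> y \<in> Aa" unfolding Aa_def using AS(4) a
      by (metis comp_assoc image_eqI)
  qed
  moreover have "Aa \<noteq> {}" unfolding Aa_def using AS(2) by auto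
  ultimately have "Aa \<in> \<A>" using AS(1) unfolding \<A>_def by auto
  then have "Aa = A" using Amin \<open>Aa \<subseteq> A\<close> by auto
  define B where "B = A \<inter> (\<lambda>f. f \<circ> a) -` {a}"
  have "closed B" unfolding B_def
    by (intro closed_Int AS(3) closed_vimage cont_rcomp) (simp add: compact_fun_closed)
  moreover have "B \<noteq> {}"
  proof -
    have "a \<in> (\<lambda>f. f \<circ> a) ` A" using \<open>Aa = A\<close> a unfolding Aa_def by simp
    then obtain b where "b \<in> A" "b \<circ> a = a" by auto
    then show ?thesis unfolding B_def by auto
  qed
  moreover have "\<forall>x\<in>B. \<forall>y\<in>B. x \<circ> y \<in> B" unfolding B_def using AS(4)
    by (simp add: comp_assoc)
  moreover have "B \<subseteq> A" unfolding B_def by auto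
  ultimately have "B \<in> \<A>" using AS(1) unfolding \<A>_def by auto
  then have "B = A" using Amin \<open>B \<subseteq> A\<close> by auto
  then have "a \<circ> a = a" using a unfolding B_def by auto
  then show ?thesis using a AS(1) by auto
qed

lemma cont_iter:
  assumes "continuous_on Z U" "U ` Z \<subseteq> Z"
  shows "continuous_on Z (U^^n) \<and> (U^^n) ` Z \<subseteq> Z"
proof (induction n)
  case 0 then show ?case by (simp add: continuous_on_id)
next
  case (Suc n)
  have c: "continuous_on Z (\<lambda>x. U ((U^^n) x))"
    by (rule continuous_on_compose2[OF assms(1)]) (use Suc in auto)
  then show ?case using Suc assms by (auto simp: o_def)
qed

lemma distal_return:
  fixes Z :: "'b::metric_space set" and U
  assumes cZ: "compact Z" and cU: "continuous_on Z U" and UZ: "U ` Z \<subseteq> Z"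
   and dis: "\<And>a b. a\<in>Z \<Longrightarrow> b\<in>Z \<Longrightarrow> a \<noteq> b \<Longrightarrow> \<exists>e>0. \<forall>n. e \<le> dist ((U^^n) a) ((U^^n) b)"
   and w: "w \<in> Z" and z: "z \<in> closure (range (\<lambda>n. (U^^n) w))"
  shows "w \<in> closure (range (\<lambda>n. (U^^n) z))"
proof -
  define V where "V = (\<lambda>y. if y \<in> Z then U y else y)"
  have VU: "(V^^n) y = (U^^n) y \<and> (U^^n) y \<in> Z" if "y \<in> Z" for n y
    using that UZ by (induction n) (auto simp: V_def)
  have Vout: "(V^^n) y = y" if "y \<notin> Z" for n y
    using that by (induction n) (auto simp: V_def)
  define Kc where "Kc = (\<lambda>y. if y \<in> Z then Z else {y})"
  define K where "K = PiE UNIV Kc"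
  have Kmem: "f \<in> K \<longleftrightarrow> (\<forall>y. f y \<in> Kc y)" for f unfolding K_def by (auto simp: PiE_iff)
  have "compactin (product_topology (\<lambda>_. euclidean) UNIV) K"
    unfolding K_def compactin_PiE by (auto simp: Kc_def cZ compactin_euclidean_iff)
  then have cK: "compact K" by (metis euclidean_product_topology compactin_euclidean_iff)
  then have clK: "closed K" by (rule compact_fun_closed)
  define E where "E = closure (range (\<lambda>n. V^^n))"
  have VK: "V^^n \<in> K" for n unfolding Kmem Kc_def using VU Vout by auto
  have EK: "E \<subseteq> K" unfolding E_def using VK clK by (intro closure_minimal) auto
  have cE: "compact E" using compact_Int_closed[OF cK closed_closure[of "range (\<lambda>n. V^^n)"]] EK
    unfolding E_def by (simp add: Int_absorb1)
  have clE: "closed E" unfolding E_def by simp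
  have Emem: "f y \<in> Z" if "f \<in> E" "y \<in> Z" for f y
  proof -
    have "f \<in> K" using that EK by auto
    then have "f y \<in> Kc y" using Kmem by blast
    then show ?thesis using that(2) by (simp add: Kc_def)
  qed
  have Eout: "f y = y" if "f \<in> E" "y \<notin> Z" for f y
  proof -
    have "f \<in> K" using that EK by auto
    then have "f y \<in> Kc y" using Kmem by blast
    then show ?thesis using that(2) by (simp add: Kc_def)
  qed
  have VE: "V^^n \<in> E" for n unfolding E_def by (meson closure_subset rangeI subsetD)
  have contVn: "continuous_on Z (V^^n)" for n
    using cont_iter[OF cU UZ, of n] continuous_on_cong[of Z Z "V^^n" "U^^n"] VU by auto
  have contL: "continuous_on E (\<lambda>g. V^^n \<circ> g)" for n
  proof (intro continuous_on_coordinatewise_then_product)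
    fix y
    show "continuous_on E (\<lambda>g. (V^^n \<circ> g) y)"
    proof (cases "y \<in> Z")
      case True
      have "continuous_on E (\<lambda>g. g y)" by (rule cont_eval)
      moreover have "(\<lambda>g. g y) ` E \<subseteq> Z" using Emem True by auto
      ultimately show ?thesis using continuous_on_compose2[OF contVn] by (simp add: o_def)
    next
      case False
      have "continuous_on E (\<lambda>g. (V^^n) y)" by (rule continuous_on_const)
      moreover have "continuous_on E (\<lambda>g. (V^^n \<circ> g) y) = continuous_on E (\<lambda>g. (V^^n) y)"
        by (rule continuous_on_cong) (auto simp: Eout False)
      ultimately show ?thesis by simp
    qed
  qed
  have step1: "V^^n \<circ> g \<in> E" if "g \<in> E" for n g
  proof -
    have "(\<lambda>g. V^^n \<circ> g) ` closure (range (\<lambda>m. V^^m)) \<subseteq> E"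
    proof (rule image_closure_subset)
      show "continuous_on (closure (range (\<lambda>m. V^^m))) (\<lambda>g. V^^n \<circ> g)" using contL E_def by simp
      show "closed E" by (rule clE)
      show "(\<lambda>g. V^^n \<circ> g) ` range (\<lambda>m. V^^m) \<subseteq> E" using VE by (auto simp: funpow_add[symmetric])
    qed
    then show ?thesis using that E_def by auto
  qed
  have semi: "f \<circ> g \<in> E" if "f \<in> E" "g \<in> E" for f g
  proof -
    have "(\<lambda>f. f \<circ> g) ` closure (range (\<lambda>m. V^^m)) \<subseteq> E"
    proof (rule image_closure_subset)
      show "continuous_on (closure (range (\<lambda>m. V^^m))) (\<lambda>f. f \<circ> g)"
        using continuous_on_subset[OF cont_rcomp] by blast
      show "closed E" by (rule clE)
      show "(\<lambda>f. f \<circ> g) ` range (\<lambda>m. V^^m) \<subseteq> E" using step1[OF that(2)] by auto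
    qed
    then show ?thesis using that E_def by auto
  qed
  have inj: "a = b" if u: "u \<in> E" and ab: "a \<in> Z" "b \<in> Z" "u a = u b" for u a b
  proof (rule ccontr)
    assume "a \<noteq> b"
    then obtain e where e: "e > 0" "\<And>n. e \<le> dist ((U^^n) a) ((U^^n) b)" using dis ab by blast
    define N where "N = (\<lambda>f. f a) -` ball (u a) (e/2) \<inter> (\<lambda>f. f b) -` ball (u b) (e/2)"
    have "open N" unfolding N_def
      by (intro open_Int open_vimage open_ball continuous_on_product_coordinates)
    moreover have "u \<in> N" unfolding N_def using e by auto
    ultimately have "range (\<lambda>n. V^^n) \<inter> N \<noteq> {}"
      using u unfolding E_def closure_iff_nhds_not_empty by blast
    then obtain n where "V^^n \<in> N" by auto
    then have "dist (u a) ((U^^n) a) < e/2" "dist (u b) ((U^^n) b) < e/2"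
      unfolding N_def using VU ab by auto
    then have "dist ((U^^n) a) ((U^^n) b) < e" using ab(3)
      by (metis dist_commute dist_triangle_half_l)
    then show False using e(2)[of n] by simp
  qed
  have cw: "compact ((\<lambda>f. f w) ` E)" by (rule compact_continuous_image[OF cont_eval cE])
  have "range (\<lambda>n. (U^^n) w) \<subseteq> (\<lambda>f. f w) ` E"
  proof safe
    fix n show "(U^^n) w \<in> (\<lambda>f. f w) ` E" using VE[of n] VU[OF w, of n] by (metis (no_types, lifting) image_eqI)
  qed
  then have "closure (range (\<lambda>n. (U^^n) w)) \<subseteq> (\<lambda>f. f w) ` E"
    using compact_imp_closed[OF cw] closure_minimal by blast
  then obtain g where g: "g \<in> E" "g w = z" using z by auto
  define Sg where "Sg = (\<lambda>f. f \<circ> g) ` E"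
  have "compact Sg" unfolding Sg_def
    by (rule compact_continuous_image[OF continuous_on_subset[OF cont_rcomp] cE]) simp
  moreover have "Sg \<noteq> {}" unfolding Sg_def using g by auto
  moreover have "a \<circ> b \<in> Sg" if ab: "a \<in> Sg" "b \<in> Sg" for a b
  proof -
    obtain a' where a': "a' \<in> E" "a = a' \<circ> g" using ab(1) unfolding Sg_def by blast
    obtain b' where b': "b' \<in> E" "b = b' \<circ> g" using ab(2) unfolding Sg_def by blast
    have "a \<circ> b = (a' \<circ> g \<circ> b') \<circ> g" using a' b' by (simp add: comp_assoc)
    moreover have "a' \<circ> g \<circ> b' \<in> E" using semi a'(1) b'(1) g(1) by blast
    ultimately show ?thesis unfolding Sg_def by auto
  qed
  ultimately obtain u where u: "u \<in> Sg" "u \<circ> u = u" using idempotent_exists by blast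
  then obtain h where h: "h \<in> E" "u = h \<circ> g" unfolding Sg_def by auto
  have uE: "u \<in> E" using h semi g by auto
  have "u y = y" if "y \<in> Z" for y
  proof -
    have "u (u y) = u y" using u(2) by (metis comp_apply)
    then show ?thesis using inj[OF uE Emem[OF uE that] that] by simp
  qed
  then have hz: "h z = w" using h g w by auto
  have zZ: "z \<in> Z"
  proof -
    have "range (\<lambda>n. (U^^n) w) \<subseteq> Z" using VU w by auto
    then have "closure (range (\<lambda>n. (U^^n) w)) \<subseteq> Z" using compact_imp_closed[OF cZ] closure_minimal by blast
    then show ?thesis using z by auto
  qed
  have "(\<lambda>f. f z) ` closure (range (\<lambda>m. V^^m)) \<subseteq> closure (range (\<lambda>n. (U^^n) z))"
  proof (rule image_closure_subset)
    show "continuous_on (closure (range (\<lambda>m. V^^m))) (\<lambda>f. f z)" by (rule cont_eval)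
    show "closed (closure (range (\<lambda>n. (U^^n) z)))" by simp
    show "(\<lambda>f. f z) ` range (\<lambda>m. V^^m) \<subseteq> closure (range (\<lambda>n. (U^^n) z))"
      using VU[OF zZ] closure_subset by fastforce
  qed
  then show ?thesis using h(1) hz unfolding E_def by auto
qed

lemma iter_int_conj:
  assumes hAB: "\<And>a. a\<in>A \<Longrightarrow> h a \<in> B" and comm: "\<And>a. a\<in>A \<Longrightarrow> h (TA a) = TB (h a)"
    and TA: "TA ` A = A" and TB: "TB ` B = B" and inj: "inj_on TB B" and a: "a \<in> A"
  shows "iter_int A TA n a \<in> A \<and> h (iter_int A TA n a) = iter_int B TB n (h a)"
proof -
  have pos: "(TA^^k) a \<in> A \<and> h ((TA^^k) a) = (TB^^k) (h a)" for k
  proof (induction k)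
    case 0 then show ?case using a by simp
  next
    case (Suc k) then show ?case using comm TA by auto
  qed
  have neg: "(inv_into A TA^^k) a \<in> A \<and> h ((inv_into A TA^^k) a) = (inv_into B TB^^k) (h a)" for k
  proof (induction k)
    case 0 then show ?case using a by simp
  next
    case (Suc k)
    define a' where "a' = (inv_into A TA^^k) a"
    have a'A: "a' \<in> A" and ha': "h a' = (inv_into B TB^^k) (h a)" using Suc unfolding a'_def by auto
    have a'img: "a' \<in> TA ` A" using TA a'A by simp
    have i1: "inv_into A TA a' \<in> A" using inv_into_into[OF a'img] .
    have i2: "TA (inv_into A TA a') = a'" using f_inv_into_f[OF a'img] .
    have "TB (h (inv_into A TA a')) = h a'" using comm[OF i1] i2 by simp
    then have "inv_into B TB (h a') = h (inv_into A TA a')"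
      using inv_into_f_eq[OF inj hAB[OF i1]] by simp
    then show ?case using i1 ha' unfolding a'_def by simp
  qed
  show ?thesis unfolding iter_int_def using pos neg by auto
qed

lemma system_props:
  assumes "is_system Z U"
  shows "compact Z" "Z \<noteq> {}" "continuous_on Z U" "U ` Z = Z" "inj_on U Z"
proof -
  obtain S0 where h: "homeomorphism Z Z U S0" using assms unfolding is_system_def by auto
  show "compact Z" "Z \<noteq> {}" using assms unfolding is_system_def by auto
  show "continuous_on Z U" "U ` Z = Z" using h unfolding homeomorphism_def by auto
  show "inj_on U Z" using h unfolding homeomorphism_def by (metis inj_on_inverseI)
qed

lemma distal_D:
  assumes "distal_system Z U" "a\<in>Z" "b\<in>Z" "a\<noteq>b"
  shows "\<exists>e>0. \<forall>n::int. e \<le> dist (iter_int Z U n a) (iter_int Z U n b)"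
  using assms unfolding distal_system_def by auto

lemma orbit_closure_minimal_distal:
  fixes Z :: "'b::metric_space set"
  assumes dZ: "distal_system Z U" and w: "w \<in> Z"
  shows "minimal_distal_system (closure (range (\<lambda>n. (U^^n) w))) U"
proof -
  have sZ: "is_system Z U" using dZ unfolding distal_system_def by (rule conjunct1)
  note sp = system_props[OF sZ]
  have UZ: "U ` Z \<subseteq> Z" using sp by simp
  have orbZ: "(U^^n) y \<in> Z" if "y \<in> Z" for n y using that UZ by (induction n) auto
  have fdis: "\<exists>e>0. \<forall>n. e \<le> dist ((U^^n) a) ((U^^n) b)" if ab: "a \<in> Z" "b \<in> Z" "a \<noteq> b" for a b
  proof -
    obtain e where e: "e > 0" "\<forall>n::int. e \<le> dist (iter_int Z U n a) (iter_int Z U n b)"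
      using distal_D[OF dZ ab] by blast
    have "e \<le> dist ((U^^n) a) ((U^^n) b)" for n using e(2)[rule_format, of "int n"] by (simp add: iter_int_def)
    then show ?thesis using e(1) by blast
  qed
  define Orb where "Orb = closure (range (\<lambda>n. (U^^n) w))"
  have clZ: "closed Z" by (rule compact_imp_closed[OF sp(1)])
  have "range (\<lambda>n. (U^^n) w) \<subseteq> Z" using orbZ[OF w] by blast
  then have OZ: "Orb \<subseteq> Z" unfolding Orb_def using clZ by (rule closure_minimal)
  have "w \<in> range (\<lambda>n. (U^^n) w)" by (rule range_eqI[of _ _ 0]) simp
  then have wO: "w \<in> Orb" unfolding Orb_def by (rule closure_subset[THEN subsetD])
  have cU: "continuous_on Z U" by (rule sp(3))
  have key: "Orb \<subseteq> Y" if Y: "Y \<subseteq> Orb" "Y \<noteq> {}" "closed Y" "U ` Y \<subseteq> Y" for Y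
  proof -
    obtain z where z: "z \<in> Y" using Y(2) by auto
    have orbY: "(U^^n) y \<in> Y" if "y \<in> Y" for n y using that Y(4) by (induction n) auto
    have zin: "z \<in> closure (range (\<lambda>n. (U^^n) w))" using z Y(1) unfolding Orb_def by blast
    have "w \<in> closure (range (\<lambda>n. (U^^n) z))"
      using distal_return[OF sp(1) cU UZ fdis w zin] by simp
    moreover have "range (\<lambda>n. (U^^n) z) \<subseteq> Y" using orbY[OF z] by blast
    then have "closure (range (\<lambda>n. (U^^n) z)) \<subseteq> Y" using Y(3) by (rule closure_minimal)
    ultimately have "w \<in> Y" by blast
    then have "range (\<lambda>n. (U^^n) w) \<subseteq> Y" using orbY by blast
    then show ?thesis unfolding Orb_def using Y(3) by (rule closure_minimal)
  qed
  have UO: "U ` Orb \<subseteq> Orb"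
    unfolding Orb_def
  proof (rule image_closure_subset)
    show "continuous_on (closure (range (\<lambda>n. (U ^^ n) w))) U" using continuous_on_subset[OF cU OZ] Orb_def by simp
    show "closed (closure (range (\<lambda>n. (U ^^ n) w)))" by simp
    show "U ` range (\<lambda>n. (U ^^ n) w) \<subseteq> closure (range (\<lambda>n. (U ^^ n) w))"
    proof safe
      fix n
      have "U ((U^^n) w) \<in> range (\<lambda>n. (U^^n) w)" by (rule range_eqI[of _ _ "Suc n"]) simp
      then show "U ((U^^n) w) \<in> closure (range (\<lambda>n. (U ^^ n) w))" by (rule closure_subset[THEN subsetD])
    qed
  qed
  have cO: "compact Orb" using compact_Int_closed[OF sp(1), of Orb] OZ unfolding Orb_def by (simp add: Int_absorb1)
  have "compact (U ` Orb)" using compact_continuous_image[OF continuous_on_subset[OF cU OZ] cO] .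
  then have "closed (U ` Orb)" by (rule compact_imp_closed)
  then have "Orb \<subseteq> U ` Orb"
  proof (rule key[rotated 2])
    show "U ` Orb \<subseteq> Orb" by (rule UO)
    show "U ` Orb \<noteq> {}" using wO by auto
    show "U ` U ` Orb \<subseteq> U ` Orb" using UO by (rule image_mono)
  qed
  then have UOe: "U ` Orb = Orb" using UO by auto
  have sO: "is_system Orb U"
  proof -
    have "\<exists>g. homeomorphism Orb Orb U g"
      using homeomorphism_compact[OF cO continuous_on_subset[OF cU OZ] UOe inj_on_subset[OF sp(5) OZ]] .
    then show ?thesis unfolding is_system_def using cO wO by auto
  qed
  have "minimal_system Orb U" unfolding minimal_system_def
  proof (intro conjI sO allI impI)
    fix Y assume "Y \<subseteq> Orb \<and> Y \<noteq> {} \<and> closed Y \<and> U ` Y = Y"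
    then show "Y = Orb" using key[of Y] by auto
  qed
  moreover have "distal_system Orb U"
    unfolding distal_system_def
  proof (intro conjI sO ballI impI)
    fix x x' assume xx: "x \<in> Orb" "x' \<in> Orb" "x \<noteq> x'"
    obtain e where e: "e > 0" "\<forall>n::int. e \<le> dist (iter_int Z U n x) (iter_int Z U n x')"
      using distal_D[OF dZ _ _ xx(3)] xx(1,2) OZ by blast
    have eq: "iter_int Orb U n y = iter_int Z U n y" if "y \<in> Orb" for n y
      using iter_int_conj[of Orb id Z U U y n] OZ UOe sp(4,5) that by auto
    show "\<exists>e>0. \<forall>n::int. e \<le> dist (iter_int Orb U n x) (iter_int Orb U n x')"
      using e eq xx by auto
  qed
  ultimately show ?thesis unfolding minimal_distal_system_def Orb_def by auto
qed

lemma funpow_bij: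
  assumes "T ` X = X" "inj_on T X"
  shows "(T^^j) ` X = X \<and> inj_on (T^^j) X"
proof (induction j)
  case 0 then show ?case by simp
next
  case (Suc j)
  have "(T^^Suc j) ` X = T ` ((T^^j) ` X)" by (simp add: image_comp)
  then have a: "(T^^Suc j) ` X = X" using Suc assms by simp
  have "inj_on (T \<circ> T^^j) X" using Suc assms by (intro comp_inj_on) auto
  then have b: "inj_on (T^^Suc j) X" by (simp only: funpow.simps)
  show ?case by (rule conjI[OF a b])
qed

lemma inv_pow:
  assumes TX: "T ` X = X" "inj_on T X" and y: "y \<in> X"
  shows "(inv_into X T ^^ m) y \<in> X \<and> (T^^m) ((inv_into X T ^^ m) y) = y"
proof (induction m)
  case 0 then show ?case using y by simp
next
  case (Suc m)
  define y' where "y' = (inv_into X T ^^ m) y"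
  have y'X: "y' \<in> X" and Ty': "(T^^m) y' = y" using Suc unfolding y'_def by auto
  have img: "y' \<in> T ` X" using TX y'X by simp
  have "inv_into X T y' \<in> X" by (rule inv_into_into[OF img])
  moreover have "T (inv_into X T y') = y'" by (rule f_inv_into_f[OF img])
  moreover have "(T^^Suc m) (inv_into X T y') = (T^^m) (T (inv_into X T y'))"
    by (simp only: funpow_Suc_right o_apply)
  moreover have "(inv_into X T ^^ Suc m) y = inv_into X T y'" by (simp add: y'_def)
  ultimately show ?case using Ty' by simp
qed

lemma iter_int_pow:
  assumes TX: "T ` X = X" "inj_on T X" and y: "y \<in> X" and j: "1 \<le> j"
  shows "iter_int X (T^^j) n y = iter_int X T (int j * n) y"
proof (cases "0 \<le> n")
  case True
  then have "0 \<le> int j * n" by simp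
  moreover have "nat (int j * n) = j * nat n" using True by (simp add: nat_mult_distrib)
  ultimately show ?thesis using True unfolding iter_int_def by (simp add: funpow_mult)
next
  case False
  then have neg: "\<not> 0 \<le> int j * n" using j by (simp add: mult_pos_neg not_le)
  have e1: "- (int j * n) = int j * (- n)" by simp
  have "nat (int j * (- n)) = nat (int j) * nat (- n)" by (rule nat_mult_distrib) simp
  then have nn: "nat (- (int j * n)) = j * nat (- n)" unfolding e1 by simp
  have Tj: "(T^^j) ` X = X" "inj_on (T^^j) X" using funpow_bij[OF TX] by auto
  have invj: "inv_into X (T^^j) z = (inv_into X T ^^ j) z" if "z \<in> X" for z
    using inv_into_f_eq[OF Tj(2)] inv_pow[OF TX that, of j] by auto
  have "(inv_into X (T^^j) ^^ k) y = (inv_into X T ^^ (j*k)) y \<and> (inv_into X T ^^ (j*k)) y \<in> X" for k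
  proof (induction k)
    case 0 then show ?case using y by simp
  next
    case (Suc k)
    have "(inv_into X (T^^j) ^^ Suc k) y = inv_into X (T^^j) ((inv_into X T ^^ (j*k)) y)"
      using Suc by simp
    also have "\<dots> = (inv_into X T ^^ j) ((inv_into X T ^^ (j*k)) y)" using invj Suc by simp
    also have "\<dots> = (inv_into X T ^^ (j + j * k)) y" by (simp only: funpow_add o_apply)
    also have "\<dots> = (inv_into X T ^^ (j * Suc k)) y" by simp
    finally show ?case using inv_pow[OF TX y, of "j * Suc k"] by simp
  qed
  then show ?thesis using False neg nn unfolding iter_int_def by simp
qed

lemma dense_seq:
  fixes X :: "'a::metric_space set"
  assumes "compact X"
  obtains q :: "nat \<Rightarrow> 'a" where "\<And>y e. y \<in> X \<Longrightarrow> e > 0 \<Longrightarrow> \<exists>i. dist y (q i) < e"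
proof -
  have "\<forall>k::nat. \<exists>F. finite F \<and> X \<subseteq> (\<Union>x\<in>F. ball x (1/ real (Suc k)))"
    using assms unfolding compact_eq_totally_bounded by simp
  then obtain F where F: "\<And>k. finite (F k)" "\<And>k. X \<subseteq> (\<Union>x\<in>F k. ball x (1/ real (Suc k)))"
    by metis
  define C where "C = insert undefined (\<Union>k. F k)"
  have cC: "countable C" using F(1) unfolding C_def by (simp add: countable_finite)
  have ne: "C \<noteq> {}" unfolding C_def by simp
  define q where "q = from_nat_into C"
  have rq: "range q = C" unfolding q_def using range_from_nat_into[OF ne cC] .
  show ?thesis
  proof (rule that)
    fix y e assume y: "y \<in> X" and e: "(e::real) > 0"
    obtain k where k: "1 / real (Suc k) < e" using e by (metis nat_approx_posE)
    then obtain c where "c \<in> F k" "dist c y < 1 / real (Suc k)" using F(2)[of k] y by auto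
    moreover then have "c \<in> range q" using rq unfolding C_def by auto
    ultimately show "\<exists>i. dist y (q i) < e" using k by (metis dist_commute order.strict_trans rangeE)
  qed
qed

lemma main_lemma:
  fixes X :: "'a::metric_space set" and R :: "nat set"
  assumes hyp: "\<And>(X :: (nat \<Rightarrow> real) set) T x. minimal_distal_system X T \<Longrightarrow> x \<in> X \<Longrightarrow>
                  (\<forall>e>0. \<exists>n\<in>R. dist ((T ^^ n) x) x < e)"
    and mdX: "minimal_distal_system X T" and xX: "x \<in> X" and l1: "1 \<le> l"
  shows "\<forall>e>0. \<exists>n\<in>R. Max ((\<lambda>j. dist ((T ^^ (j * n)) x) x) ` {1..l}) < e"
proof -
  have dX: "distal_system X T" using mdX unfolding minimal_distal_system_def by (rule conjunct2)
  have sX: "is_system X T" using dX unfolding distal_system_def by (rule conjunct1)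
  note spX = system_props[OF sX]
  have Tj: "(T^^j) ` X = X" "inj_on (T^^j) X" for j using funpow_bij[OF spX(4,5)] by auto
  have cTj: "continuous_on X (T^^j)" for j using cont_iter[OF spX(3)] spX(4) by auto
  define Kc where "Kc = (\<lambda>j::nat. if j \<in> {1..l} then X else {x})"
  define P where "P = PiE UNIV Kc"
  have Pmem: "f \<in> P \<longleftrightarrow> (\<forall>j. f j \<in> Kc j)" for f unfolding P_def by (auto simp: PiE_iff)
  have PX: "f j \<in> X" if "f \<in> P" for f j using that xX unfolding Pmem Kc_def by (auto split: if_splits)
  have Pout: "f j = x" if "f \<in> P" "j \<notin> {1..l}" for f j
  proof -
    have "f j \<in> Kc j" using that(1) unfolding Pmem by blast
    moreover have "Kc j = {x}" unfolding Kc_def by (rule if_not_P[OF that(2)])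
    ultimately show ?thesis by simp
  qed
  have "compactin (product_topology (\<lambda>_. euclidean) UNIV) P"
    unfolding P_def compactin_PiE by (auto simp: Kc_def spX(1) compactin_euclidean_iff)
  then have cP: "compact P" by (metis euclidean_product_topology compactin_euclidean_iff)
  define w0 where "w0 = (\<lambda>j::nat. x)"
  have w0P: "w0 \<in> P" unfolding Pmem Kc_def w0_def using xX by auto
  define S where "S = (\<lambda>f. \<lambda>j::nat. if j \<in> {1..l} then (T^^j) (f j) else f j)"
  have SP: "S f \<in> P" if fP: "f \<in> P" for f
    unfolding Pmem
  proof
    fix j
    show "S f j \<in> Kc j"
    proof (cases "j \<in> {1..l}")
      case True
      have "(T^^j) (f j) \<in> (T^^j) ` X" using PX[OF fP] by blast
      then show ?thesis using True Tj(1)[of j] unfolding S_def Kc_def by simp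
    next
      case False
      have "f j \<in> Kc j" using fP unfolding Pmem by blast
      moreover have "S f j = f j" unfolding S_def by (rule if_not_P[OF False])
      ultimately show ?thesis by simp
    qed
  qed
  have SPe: "S ` P = P"
  proof
    show "S ` P \<subseteq> P" using SP by auto
    show "P \<subseteq> S ` P"
    proof
      fix g assume g: "g \<in> P"
      define f where "f = (\<lambda>j. if j \<in> {1..l} then inv_into X (T^^j) (g j) else g j)"
      have fj: "inv_into X (T^^j) (g j) \<in> X \<and> (T^^j) (inv_into X (T^^j) (g j)) = g j" for j
      proof -
        have "g j \<in> (T^^j) ` X" using PX[OF g] Tj(1)[of j] by simp
        then show ?thesis using inv_into_into f_inv_into_f by metis
      qed
      have "f \<in> P" unfolding Pmem
      proof
        fix j
        show "f j \<in> Kc j"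
        proof (cases "j \<in> {1..l}")
          case True
          have "f j = inv_into X (T^^j) (g j)" unfolding f_def by (rule if_P[OF True])
          moreover have "Kc j = X" unfolding Kc_def by (rule if_P[OF True])
          ultimately show ?thesis using fj by simp
        next
          case False
          have "f j = g j" unfolding f_def by (rule if_not_P[OF False])
          then show ?thesis using g unfolding Pmem by simp
        qed
      qed
      moreover have "S f = g"
      proof
        fix j
        show "S f j = g j"
        proof (cases "j \<in> {1..l}")
          case True
          have "f j = inv_into X (T^^j) (g j)" unfolding f_def by (rule if_P[OF True])
          moreover have "S f j = (T^^j) (f j)" unfolding S_def by (rule if_P[OF True])
          ultimately show ?thesis using fj by simp
        next
          case False
          have "f j = g j" unfolding f_def by (rule if_not_P[OF False])
          moreover have "S f j = f j" unfolding S_def by (rule if_not_P[OF False])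
          ultimately show ?thesis by simp
        qed
      qed
      ultimately show "g \<in> S ` P" by auto
    qed
  qed
  have Sinj: "inj_on S P"
  proof
    fix f g assume fg: "f \<in> P" "g \<in> P" "S f = S g"
    show "f = g"
    proof
      fix j
      show "f j = g j"
      proof (cases "j \<in> {1..l}")
        case True
        then have "(T^^j) (f j) = (T^^j) (g j)" using fun_cong[OF fg(3), of j] unfolding S_def by simp
        then show ?thesis using Tj(2)[of j] PX fg(1,2) by (meson inj_onD)
      next
        case False then show ?thesis using Pout[OF fg(1) False] Pout[OF fg(2) False] by simp
      qed
    qed
  qed
  have cS: "continuous_on P S"
    unfolding S_def
  proof (intro continuous_on_coordinatewise_then_product)
    fix j
    show "continuous_on P (\<lambda>f. if j \<in> {1..l} then (T^^j) (f j) else f j)"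
    proof (cases "j \<in> {1..l}")
      case True
      have "continuous_on P (\<lambda>f. (T^^j) (f j))"
        by (rule continuous_on_compose2[OF cTj cont_eval]) (use PX in auto)
      then show ?thesis by (simp only: if_P[OF True])
    next
      case False then show ?thesis by (simp only: if_not_P[OF False] if_False cont_eval)
    qed
  qed
  obtain q :: "nat \<Rightarrow> 'a" where q: "\<And>y e. y \<in> X \<Longrightarrow> e > 0 \<Longrightarrow> \<exists>i. dist y (q i) < e"
    using dense_seq[OF spX(1)] by blast
  define Phi where "Phi = (\<lambda>f::nat\<Rightarrow>'a. \<lambda>k::nat. dist (f (fst (prod_decode k))) (q (snd (prod_decode k))))"
  have cPhi: "continuous_on P Phi"
    unfolding Phi_def
    by (intro continuous_on_coordinatewise_then_product continuous_on_dist cont_eval continuous_on_const)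
  have Phiinj: "inj_on Phi P"
  proof
    fix f g assume fg: "f \<in> P" "g \<in> P" "Phi f = Phi g"
    have dd: "dist (f j) (q i) = dist (g j) (q i)" for j i
      using fun_cong[OF fg(3), of "prod_encode (j, i)"] unfolding Phi_def by simp
    show "f = g"
    proof
      fix j
      show "f j = g j"
      proof (rule ccontr)
        assume ne: "f j \<noteq> g j"
        define d where "d = dist (f j) (g j)"
        have d: "d > 0" using ne unfolding d_def by simp
        obtain i where i: "dist (f j) (q i) < d/2" using q[OF PX[OF fg(1)], of "d/2"] d by auto
        have "d \<le> dist (f j) (q i) + dist (g j) (q i)" unfolding d_def by (metis dist_commute dist_triangle)
        then show False using i dd[of j i] by simp
      qed
    qed
  qed
  define Zb where "Zb = Phi ` P"
  have cZb: "compact Zb" unfolding Zb_def by (rule compact_continuous_image[OF cPhi cP])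
  obtain Psi where hP: "homeomorphism P Zb Phi Psi"
    using homeomorphism_compact[OF cP cPhi Zb_def[symmetric] Phiinj] by blast
  have PsiPhi: "Psi (Phi f) = f" if "f \<in> P" for f using hP that unfolding homeomorphism_def by auto
  have PhiPsi: "Phi (Psi z) = z" if "z \<in> Zb" for z using hP that unfolding homeomorphism_def by auto
  have PsiZ: "Psi z \<in> P" if "z \<in> Zb" for z using hP that unfolding homeomorphism_def by auto
  have cPsi: "continuous_on Zb Psi" using hP unfolding homeomorphism_def by auto
  have PhiP: "Phi f \<in> Zb" if "f \<in> P" for f using that unfolding Zb_def by auto
  define Ub where "Ub = (\<lambda>z. Phi (S (Psi z)))"
  have UbZ: "Ub ` Zb = Zb"
  proof -
    have "Psi ` Zb = P" using hP unfolding homeomorphism_def by auto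
    then have "Ub ` Zb = Phi ` (S ` P)" unfolding Ub_def by (auto simp: image_comp)
    then show ?thesis using SPe Zb_def by simp
  qed
  have cUb: "continuous_on Zb Ub" unfolding Ub_def
  proof (rule continuous_on_compose2[OF cPhi])
    show "continuous_on Zb (\<lambda>z. S (Psi z))"
      by (rule continuous_on_compose2[OF cS cPsi]) (use PsiZ in auto)
    show "(\<lambda>z. S (Psi z)) ` Zb \<subseteq> P" using PsiZ SP by auto
  qed
  have Ubinj: "inj_on Ub Zb"
  proof
    fix z z' assume zz: "z \<in> Zb" "z' \<in> Zb" "Ub z = Ub z'"
    then have "S (Psi z) = S (Psi z')" unfolding Ub_def using PsiPhi SP PsiZ by metis
    then have "Psi z = Psi z'" using Sinj PsiZ zz(1,2) by (meson inj_onD)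
    then show "z = z'" using PhiPsi zz(1,2) by metis
  qed
  have sZb: "is_system Zb Ub"
  proof -
    have "\<exists>g. homeomorphism Zb Zb Ub g" by (rule homeomorphism_compact[OF cZb cUb UbZ Ubinj])
    then show ?thesis unfolding is_system_def using cZb PhiP[OF w0P] by auto
  qed
  define h where "h = (\<lambda>j z. Psi z j)"
  have ch: "continuous_on Zb (h j)" for j unfolding h_def
    by (rule continuous_on_compose2[OF cont_eval cPsi]) auto
  have hX: "h j z \<in> X" if "z \<in> Zb" for j z unfolding h_def using PX PsiZ that by auto
  have hcomm: "h j (Ub z) = (T^^j) (h j z)" if "z \<in> Zb" "j \<in> {1..l}" for j z
    using that PsiPhi SP PsiZ unfolding h_def Ub_def S_def by simp
  have hiter: "iter_int Zb Ub n z \<in> Zb \<and> h j (iter_int Zb Ub n z) = iter_int X T (int j * n) (h j z)"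
    if "z \<in> Zb" "j \<in> {1..l}" for j z n
  proof -
    have "iter_int Zb Ub n z \<in> Zb \<and> h j (iter_int Zb Ub n z) = iter_int X (T^^j) n (h j z)"
    proof -
      have hcj: "\<And>a. a \<in> Zb \<Longrightarrow> h j (Ub a) = (T^^j) (h j a)" using hcomm that(2) by blast
      show ?thesis by (rule iter_int_conj[where A=Zb and h="h j" and B=X and TA=Ub and TB="T^^j", OF hX[of _ j] hcj UbZ Tj(1)[of j] Tj(2)[of j] that(1)])
    qed
    then show ?thesis using iter_int_pow[OF spX(4,5) hX[OF that(1)]] that(2) by auto
  qed
  have dZb: "distal_system Zb Ub"
    unfolding distal_system_def
  proof (intro conjI sZb ballI impI)
    fix z1 z2 assume zz: "z1 \<in> Zb" "z2 \<in> Zb" "z1 \<noteq> z2"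
    then have "Psi z1 \<noteq> Psi z2" using PhiPsi by metis
    then obtain j where j: "Psi z1 j \<noteq> Psi z2 j" by auto
    then have jl: "j \<in> {1..l}" using Pout PsiZ zz(1,2) by metis
    have hne: "h j z1 \<noteq> h j z2" using j unfolding h_def by simp
    obtain e where e: "e > 0" "\<forall>m::int. e \<le> dist (iter_int X T m (h j z1)) (iter_int X T m (h j z2))"
      using distal_D[OF dX hX[OF zz(1)] hX[OF zz(2)] hne] by blast
    have "uniformly_continuous_on Zb (h j)" by (rule compact_uniformly_continuous[OF ch cZb])
    then obtain d where d: "d > 0" "\<And>a b. a \<in> Zb \<Longrightarrow> b \<in> Zb \<Longrightarrow> dist b a < d \<Longrightarrow> dist (h j b) (h j a) < e"
      unfolding uniformly_continuous_on_def using e(1) by metis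
    have "d \<le> dist (iter_int Zb Ub n z1) (iter_int Zb Ub n z2)" for n
    proof (rule ccontr)
      assume "\<not> d \<le> dist (iter_int Zb Ub n z1) (iter_int Zb Ub n z2)"
      then have "dist (iter_int Zb Ub n z2) (iter_int Zb Ub n z1) < d" by (simp add: dist_commute)
      then have "dist (h j (iter_int Zb Ub n z2)) (h j (iter_int Zb Ub n z1)) < e"
        using d(2) hiter[OF zz(1) jl] hiter[OF zz(2) jl] by blast
      then show False using e(2)[rule_format, of "int j * n"] hiter[OF zz(1) jl, of n] hiter[OF zz(2) jl, of n]
        by (simp add: dist_commute)
    qed
    then show "\<exists>e>0. \<forall>n::int. e \<le> dist (iter_int Zb Ub n z1) (iter_int Zb Ub n z2)" using d(1) by blast
  qed
  define z0 where "z0 = Phi w0"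
  have z0Z: "z0 \<in> Zb" unfolding z0_def using PhiP w0P by simp
  define Orb where "Orb = closure (range (\<lambda>n. (Ub^^n) z0))"
  have mdO: "minimal_distal_system Orb Ub" unfolding Orb_def
    by (rule orbit_closure_minimal_distal[OF dZb z0Z])
  have "z0 \<in> range (\<lambda>n. (Ub^^n) z0)" by (rule range_eqI[of _ _ 0]) simp
  then have z0O: "z0 \<in> Orb" unfolding Orb_def by (rule closure_subset[THEN subsetD])
  have rec: "\<forall>e>0. \<exists>n\<in>R. dist ((Ub ^^ n) z0) z0 < e" by (rule hyp[OF mdO z0O])
  have Spow: "(S^^n) w0 \<in> P \<and> (Ub^^n) z0 = Phi ((S^^n) w0)" for n
  proof (induction n)
    case 0 then show ?case using w0P z0_def by simp
  next
    case (Suc n)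
    then show ?case using SP PsiPhi unfolding Ub_def by simp
  qed
  have Scoord: "(S^^n) w0 j = ((T^^j)^^n) x" if "j \<in> {1..l}" for n j
  proof (induction n)
    case 0 then show ?case unfolding w0_def by simp
  next
    case (Suc n) then show ?case using that unfolding S_def by simp
  qed
  have hz: "h j ((Ub^^n) z0) = (T^^(j*n)) x" if "j \<in> {1..l}" for j n
    using Spow[of n] PsiPhi Scoord[OF that, of n] unfolding h_def by (simp add: funpow_mult)
  have h0: "h j z0 = x" for j unfolding h_def z0_def using PsiPhi[OF w0P] w0_def by simp
  have UbnZ: "(Ub^^n) z0 \<in> Zb" for n using Spow PhiP by metis
  show ?thesis
  proof (intro allI impI)
    fix e :: real assume e: "e > 0"
    have "\<forall>j\<in>{1..l}. \<exists>d>0. \<forall>z\<in>Zb. dist z z0 < d \<longrightarrow> dist (h j z) (h j z0) < e"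
      using ch z0Z e unfolding continuous_on_iff by blast
    then obtain d where d: "\<And>j. j \<in> {1..l} \<Longrightarrow> d j > 0"
      "\<And>j z. j \<in> {1..l} \<Longrightarrow> z \<in> Zb \<Longrightarrow> dist z z0 < d j \<Longrightarrow> dist (h j z) (h j z0) < e"
      by metis
    define dm where "dm = Min (d ` {1..l})"
    have fin: "finite (d ` {1..l})" "d ` {1..l} \<noteq> {}" using l1 by auto
    have dm: "dm > 0" unfolding dm_def using fin d(1) by (auto simp: Min_gr_iff)
    obtain n where n: "n \<in> R" "dist ((Ub ^^ n) z0) z0 < dm" using rec dm by blast
    have "dist ((T ^^ (j * n)) x) x < e" if j: "j \<in> {1..l}" for j
    proof -
      have "dm \<le> d j" unfolding dm_def using fin j by auto
      then have "dist (h j ((Ub ^^ n) z0)) (h j z0) < e" using d(2)[OF j UbnZ] n(2) by simp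
      then show ?thesis using hz[OF j] h0 by simp
    qed
    then have "Max ((\<lambda>j. dist ((T ^^ (j * n)) x) x) ` {1..l}) < e"
      using l1 by (subst Max_less_iff) auto
    then show "\<exists>n\<in>R. Max ((\<lambda>j. dist ((T ^^ (j * n)) x) x) ` {1..l}) < e" using n(1) by blast
  qed
qed

theorem mainTheorem5:
  fixes R :: "nat set"
  assumes hyp: "\<And>(X :: (nat \<Rightarrow> real) set) T x. minimal_distal_system X T \<Longrightarrow> x \<in> X \<Longrightarrow>
                  (\<forall>e>0. \<exists>n\<in>R. dist ((T ^^ n) x) x < e)"
  shows "\<And>(X :: 'a::metric_space set) T x (l::nat). minimal_distal_system X T \<Longrightarrow> x \<in> X \<Longrightarrow> 1 \<le> l \<Longrightarrow>
           (\<forall>e>0. \<exists>n\<in>R. Max ((\<lambda>j. dist ((T ^^ (j * n)) x) x) ` {1..l}) < e)"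
  by (rule main_lemma[OF hyp])

end
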